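(* Let $K$ be a perfect field with $\mathrm{char}(K)\neq 2$ and algebraic closure $K_a$. Suppose that $E\subset\mathbb{P}^2$ is an absolutely irreducible cubic curve defined over $K$, and that $B\subset E(K_a)$ is a $7$-element set which is a $\mathrm{Gal}(K)$-orbit. Assume that the image $G_B$ of $\mathrm{Gal}(K)$ in the group $\mathrm{Perm}(B)$ of all permutations of $B$ is either $\mathrm{Perm}(B)\cong\mathbf{S}_7$ or the alternating group $\mathbf{A}_7$. Then $B$ is in general position, i.e. no three points of $B$ lie on a line and no six points of $B$ lie on a conic. *)

theory Defs
  imports "HOL-Computational_Algebra.Polynomial" "HOL-Combinatorics.Permutations"
begin

text \<open>Ambient field 'a plays the role of the algebraic closure K_a; K is a subset of it.
Points of the projective plane P^2(K_a) are represented by nonzero homogeneous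
coordinate triples, two triples representing the same point iff proportional.\<close>

type_synonym 'a pt = "'a \<times> 'a \<times> 'a"

definition subfield :: "'a::field set \<Rightarrow> bool" where
  "subfield K \<longleftrightarrow> 0 \<in> K \<and> 1 \<in> K \<and> (\<forall>x\<in>K. \<forall>y\<in>K. x + y \<in> K \<and> x * y \<in> K)
     \<and> (\<forall>x\<in>K. - x \<in> K \<and> inverse x \<in> K)"

definition algebraically_closed :: "'a::field itself \<Rightarrow> bool" where
  "algebraically_closed _ \<longleftrightarrow> (\<forall>p :: 'a poly. degree p > 0 \<longrightarrow> (\<exists>x. poly p x = 0))"

definition algebraic_over :: "'a::field set \<Rightarrow> 'a \<Rightarrow> bool" where
  "algebraic_over K x \<longleftrightarrow> (\<exists>p. p \<noteq> 0 \<and> (\<forall>i. coeff p i \<in> K) \<and> poly p x = 0)"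

definition is_algebraic_closure_of :: "'a::field set \<Rightarrow> bool" where
  "is_algebraic_closure_of K \<longleftrightarrow> subfield K \<and> algebraically_closed TYPE('a) \<and> (\<forall>x. algebraic_over K x)"

definition perfect_subfield :: "'a::field set \<Rightarrow> bool" where
  "perfect_subfield K \<longleftrightarrow>
     (\<forall>p::nat. prime p \<and> of_nat p = (0::'a) \<longrightarrow> (\<forall>x\<in>K. \<exists>y\<in>K. y ^ p = x))"

definition field_aut :: "('a::field \<Rightarrow> 'a) \<Rightarrow> bool" where
  "field_aut \<sigma> \<longleftrightarrow> bij \<sigma> \<and> (\<forall>x y. \<sigma> (x + y) = \<sigma> x + \<sigma> y) \<and> (\<forall>x y. \<sigma> (x * y) = \<sigma> x * \<sigma> y)"

definition Gal :: "'a::field set \<Rightarrow> ('a \<Rightarrow> 'a) set" where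
  "Gal K = {\<sigma>. field_aut \<sigma> \<and> (\<forall>x\<in>K. \<sigma> x = x)}"

definition pt_map :: "('a \<Rightarrow> 'a) \<Rightarrow> 'a pt \<Rightarrow> 'a pt" where
  "pt_map \<sigma> v = (\<sigma> (fst v), \<sigma> (fst (snd v)), \<sigma> (snd (snd v)))"

definition proportional :: "'a::field pt \<Rightarrow> 'a pt \<Rightarrow> bool" where
  "proportional v w \<longleftrightarrow> (\<exists>c. c \<noteq> 0 \<and> v = (c * fst w, c * fst (snd w), c * snd (snd w)))"

definition mons :: "nat \<Rightarrow> (nat \<times> nat \<times> nat) set" where
  "mons d = {(i, j, k). i + j + k = d}"

definition form_eval :: "nat \<Rightarrow> (nat \<times> nat \<times> nat \<Rightarrow> 'a::field) \<Rightarrow> 'a pt \<Rightarrow> 'a" where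
  "form_eval d c v = (\<Sum>(i, j, k)\<in>mons d. c (i, j, k) * fst v ^ i * fst (snd v) ^ j * snd (snd v) ^ k)"

definition nonzero_form :: "nat \<Rightarrow> (nat \<times> nat \<times> nat \<Rightarrow> 'a::field) \<Rightarrow> bool" where
  "nonzero_form d c \<longleftrightarrow> (\<exists>m\<in>mons d. c m \<noteq> 0)"

text \<open>A cubic form is absolutely irreducible iff it does not factor over K_a into
forms of positive degree; for degree 3 the only possible factorization is linear times quadratic.
Forms over the infinite field K_a are identified with their polynomial functions.\<close>
definition abs_irreducible_cubic :: "(nat \<times> nat \<times> nat \<Rightarrow> 'a::field) \<Rightarrow> bool" where
  "abs_irreducible_cubic c \<longleftrightarrow> nonzero_form 3 c \<and>
     \<not> (\<exists>l q. nonzero_form 1 l \<and> nonzero_form 2 q \<and>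
            (\<forall>v. form_eval 3 c v = form_eval 1 l v * form_eval 2 q v))"

definition curve_points :: "(nat \<times> nat \<times> nat \<Rightarrow> 'a::field) \<Rightarrow> 'a pt set" where
  "curve_points c = {v. v \<noteq> (0, 0, 0) \<and> form_eval 3 c v = 0}"

definition distinct_proj_points :: "'a::field pt set \<Rightarrow> bool" where
  "distinct_proj_points B \<longleftrightarrow> (\<forall>b\<in>B. b \<noteq> (0, 0, 0)) \<and>
     (\<forall>b\<in>B. \<forall>b'\<in>B. proportional b b' \<longrightarrow> b = b')"

definition gal_orbit :: "'a::field set \<Rightarrow> 'a pt set \<Rightarrow> bool" where
  "gal_orbit K B \<longleftrightarrow> B \<noteq> {} \<and>
     (\<forall>\<sigma>\<in>Gal K. \<forall>b\<in>B. \<exists>b'\<in>B. proportional (pt_map \<sigma> b) b') \<and>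
     (\<forall>b\<in>B. \<forall>b'\<in>B. \<exists>\<sigma>\<in>Gal K. proportional (pt_map \<sigma> b) b')"

definition gal_image :: "'a::field set \<Rightarrow> 'a pt set \<Rightarrow> ('a pt \<Rightarrow> 'a pt) set" where
  "gal_image K B = {\<pi>. \<pi> permutes B \<and>
     (\<exists>\<sigma>\<in>Gal K. \<forall>b\<in>B. proportional (pt_map \<sigma> b) (\<pi> b))}"

definition general_position :: "'a::field pt set \<Rightarrow> bool" where
  "general_position B \<longleftrightarrow>
     (\<forall>S\<subseteq>B. card S = 3 \<longrightarrow> \<not> (\<exists>l. nonzero_form 1 l \<and> (\<forall>v\<in>S. form_eval 1 l v = 0))) \<and>
     (\<forall>S\<subseteq>B. card S = 6 \<longrightarrow> \<not> (\<exists>q. nonzero_form 2 q \<and> (\<forall>v\<in>S. form_eval 2 q v = 0)))"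

end

theory Submission
  imports Defs
begin

definition mon :: "nat \<times> nat \<times> nat \<Rightarrow> 'a::field pt \<Rightarrow> 'a" where
  "mon m v = fst v ^ fst m * fst (snd v) ^ fst (snd m) * snd (snd v) ^ snd (snd m)"

lemma form_eval_mon: "form_eval d c v = (\<Sum>m\<in>mons d. c m * mon m v)"
  unfolding form_eval_def mon_def by (simp add: split_beta mult.assoc)

lemma finite_mons: "finite (mons d)"
proof -
  have "mons d \<subseteq> {..d} \<times> {..d} \<times> {..d}" by (auto simp: mons_def)
  then show ?thesis by (rule finite_subset) auto
qed

lemma mons1: "mons 1 = {(1,0,0),(0,1,0),(0,0,1)}"
  by (auto simp: mons_def)
lemma mons2: "mons 2 = {(2,0,0),(0,2,0),(0,0,2),(1,1,0),(1,0,1),(0,1,1)}"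
  unfolding mons_def by auto presburger?

definition is_form :: "nat \<Rightarrow> ('a::field pt \<Rightarrow> 'a) \<Rightarrow> bool" where
  "is_form d f \<longleftrightarrow> (\<exists>c. \<forall>v. f v = form_eval d c v)"

lemma is_form_zero: "is_form d (\<lambda>v. 0)"
  unfolding is_form_def by (rule exI[of _ "\<lambda>_. 0"]) (simp add: form_eval_mon)

lemma is_form_add:
  assumes "is_form d f" "is_form d g" shows "is_form d (\<lambda>v. f v + g v)"
proof -
  obtain a b where a: "\<forall>v. f v = form_eval d a v" and b: "\<forall>v. g v = form_eval d b v"
    using assms unfolding is_form_def by blast
  show ?thesis unfolding is_form_def
    by (rule exI[of _ "\<lambda>m. a m + b m"]) (simp add: a b form_eval_mon sum.distrib distrib_right)
qed

lemma is_form_scale: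
  assumes "is_form d f" shows "is_form d (\<lambda>v. k * f v)"
proof -
  obtain a where a: "\<forall>v. f v = form_eval d a v"
    using assms unfolding is_form_def by blast
  show ?thesis unfolding is_form_def
    by (rule exI[of _ "\<lambda>m. k * a m"]) (simp add: a form_eval_mon sum_distrib_left mult.assoc)
qed

lemma is_form_sum:
  assumes "finite A" "\<And>x. x \<in> A \<Longrightarrow> is_form d (f x)"
  shows "is_form d (\<lambda>v. \<Sum>x\<in>A. f x v)"
  using assms by (induction A rule: finite_induct) (auto intro: is_form_zero is_form_add)

lemma is_form_const: "is_form 0 (\<lambda>v. k)"
proof -
  have "mons 0 = {(0,0,0)}" by (auto simp: mons_def)
  then show ?thesis unfolding is_form_def
    by (intro exI[of _ "\<lambda>_. k"]) (simp add: form_eval_mon mon_def)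
qed

definition padd :: "nat \<times> nat \<times> nat \<Rightarrow> nat \<times> nat \<times> nat \<Rightarrow> nat \<times> nat \<times> nat" where
  "padd m1 m2 = (fst m1 + fst m2, fst (snd m1) + fst (snd m2), snd (snd m1) + snd (snd m2))"

lemma mon_padd: "mon (padd m1 m2) v = mon m1 v * mon m2 v"
  by (simp add: mon_def padd_def power_add algebra_simps)

lemma is_form_mult:
  assumes "is_form a f" "is_form b g" shows "is_form (a + b) (\<lambda>v. f v * g v)"
proof -
  obtain c1 c2 where c1: "\<forall>v. f v = form_eval a c1 v" and c2: "\<forall>v. g v = form_eval b c2 v"
    using assms unfolding is_form_def by blast
  define P where "P = mons a \<times> mons b"
  define h where "h = (\<lambda>p. padd (fst p) (snd p))"
  define cc where "cc = (\<lambda>m. \<Sum>p\<in>{p \<in> P. h p = m}. c1 (fst p) * c2 (snd p))"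
  have fP: "finite P" unfolding P_def by (simp add: finite_mons)
  have hP: "h ` P \<subseteq> mons (a + b)" unfolding h_def P_def by (auto simp: mons_def padd_def)
  have "f v * g v = form_eval (a + b) cc v" for v
  proof -
    have "f v * g v = (\<Sum>m1\<in>mons a. \<Sum>m2\<in>mons b. (c1 m1 * c2 m2) * mon (padd m1 m2) v)"
      by (simp add: c1 c2 form_eval_mon sum_product mon_padd algebra_simps)
    also have "\<dots> = (\<Sum>p\<in>P. (c1 (fst p) * c2 (snd p)) * mon (h p) v)"
      unfolding P_def h_def by (simp add: sum.cartesian_product split_beta)
    also have "\<dots> = (\<Sum>m\<in>mons (a+b). \<Sum>p\<in>{p \<in> P. h p = m}. (c1 (fst p) * c2 (snd p)) * mon (h p) v)"
      by (rule sum.group[OF fP finite_mons hP, symmetric])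
    also have "\<dots> = (\<Sum>m\<in>mons (a+b). \<Sum>p\<in>{p \<in> P. h p = m}. (c1 (fst p) * c2 (snd p)) * mon m v)"
      by (intro sum.cong refl) auto
    also have "\<dots> = (\<Sum>m\<in>mons (a+b). cc m * mon m v)"
      unfolding cc_def by (simp add: sum_distrib_right)
    finally show ?thesis by (simp add: form_eval_mon)
  qed
  then show ?thesis unfolding is_form_def by blast
qed

definition lin_of :: "'a::field pt \<Rightarrow> nat \<times> nat \<times> nat \<Rightarrow> 'a" where
  "lin_of n m = (if m = (1,0,0) then fst n else if m = (0,1,0) then fst (snd n)
     else if m = (0,0,1) then snd (snd n) else 0)"

definition dot :: "'a::field pt \<Rightarrow> 'a pt \<Rightarrow> 'a" where
  "dot n v = fst n * fst v + fst (snd n) * fst (snd v) + snd (snd n) * snd (snd v)"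

definition lv :: "(nat \<times> nat \<times> nat \<Rightarrow> 'a::field) \<Rightarrow> 'a pt" where
  "lv l = (l (1,0,0), l (0,1,0), l (0,0,1))"

lemma form1: "form_eval 1 l v = dot (lv l) v"
  unfolding form_eval_mon mons1 by (simp add: form_eval_mon mons1 mon_def dot_def lv_def)

lemma lv_lin_of[simp]: "lv (lin_of n) = n"
  by (simp add: lv_def lin_of_def)

lemma nonzero_form1: "nonzero_form 1 l \<longleftrightarrow> lv l \<noteq> (0,0,0)"
  unfolding nonzero_form_def mons1 lv_def by auto

lemma is_form_lin: "is_form 1 (\<lambda>v. dot n v)"
  unfolding is_form_def form1 by (rule exI[of _ "lin_of n"]) simp

lemma is_form_pow:
  assumes "is_form 1 g" shows "is_form n (\<lambda>v. g v ^ n)"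
proof (induction n)
  case 0 then show ?case using is_form_const[of 1] by simp
next
  case (Suc n)
  from is_form_mult[OF assms Suc] show ?case by simp
qed

lemma is_form_subst:
  assumes "is_form d f" "is_form 1 g1" "is_form 1 g2" "is_form 1 g3"
  shows "is_form d (\<lambda>v. f (g1 v, g2 v, g3 v))"
proof -
  obtain c where c: "\<forall>v. f v = form_eval d c v" using assms(1) unfolding is_form_def by blast
  have eq: "f (g1 v, g2 v, g3 v) = (\<Sum>m\<in>mons d. c m * (g1 v ^ fst m * g2 v ^ fst (snd m) * g3 v ^ snd (snd m)))" for v
    by (simp add: c form_eval_mon mon_def)
  have "is_form d (\<lambda>v. c m * (g1 v ^ fst m * g2 v ^ fst (snd m) * g3 v ^ snd (snd m)))" if "m \<in> mons d" for m
  proof -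
    have "is_form (fst m + fst (snd m) + snd (snd m)) (\<lambda>v. g1 v ^ fst m * g2 v ^ fst (snd m) * g3 v ^ snd (snd m))"
      by (intro is_form_mult is_form_pow assms)
    moreover have "fst m + fst (snd m) + snd (snd m) = d" using that by (auto simp: mons_def)
    ultimately show ?thesis by (intro is_form_scale) simp
  qed
  then have "is_form d (\<lambda>v. \<Sum>m\<in>mons d. c m * (g1 v ^ fst m * g2 v ^ fst (snd m) * g3 v ^ snd (snd m)))"
    by (intro is_form_sum finite_mons)
  then show ?thesis by (simp add: eq)
qed

lemma uni_roots:
  fixes a :: "nat \<Rightarrow> 'a::field"
  assumes "finite R" "card R > n" "\<forall>t\<in>R. (\<Sum>i\<le>n. a i * t^i) = 0" "i \<le> n"
  shows "a i = 0"
proof -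
  define p where "p = (\<Sum>j\<le>n. monom (a j) j)"
  have ev: "poly p t = (\<Sum>j\<le>n. a j * t^j)" for t by (simp add: p_def poly_sum poly_monom)
  have co: "coeff p i = a i" using assms(4) by (simp add: p_def coeff_sum coeff_monom)
  have "p = 0"
  proof (rule ccontr)
    assume "p \<noteq> 0"
    have "card R \<le> card {x. poly p x = 0}"
      by (intro card_mono poly_roots_finite[OF \<open>p\<noteq>0\<close>]) (use assms ev in auto)
    also have "\<dots> \<le> degree p" by (rule card_poly_roots_bound) fact
    also have "degree p \<le> n" unfolding p_def
      by (intro degree_sum_le) (auto intro: order.trans[OF degree_monom_le])
    finally show False using assms(2) by simp
  qed
  then show ?thesis using co by simp
qed

lemma uni_zero:
  fixes a :: "nat \<Rightarrow> 'a::field"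
  assumes "infinite (UNIV::'a set)" "\<forall>t. (\<Sum>i\<le>n. a i * t^i) = 0" "i \<le> n"
  shows "a i = 0"
proof -
  obtain R :: "'a set" where "finite R" "card R = Suc n"
    using infinite_arbitrarily_large[OF assms(1)] by blast
  then show ?thesis using uni_roots[of R n a i] assms by auto
qed

lemma alg_closed_infinite:
  assumes "algebraically_closed TYPE('a::field)" shows "infinite (UNIV::'a set)"
proof
  assume fin: "finite (UNIV::'a set)"
  define q :: "'a poly" where "q = (\<Prod>a\<in>UNIV. [:-a, 1:])"
  define p :: "'a poly" where "p = 1 + q"
  have "degree q = (\<Sum>a\<in>(UNIV::'a set). degree [:-a, 1:])"
    unfolding q_def by (rule degree_prod_eq_sum_degree) auto
  also have "\<dots> = card (UNIV::'a set)" by simp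
  finally have dq: "degree q = card (UNIV::'a set)" .
  have "card (UNIV::'a set) > 0" using fin by (simp add: card_gt_0_iff)
  then have "degree p > 0" unfolding p_def using dq
    by (subst degree_add_eq_right) auto
  then obtain x where "poly p x = 0" using assms unfolding algebraically_closed_def by blast
  moreover have "poly q x = 0" unfolding q_def poly_prod
    using fin by (intro prod_zero bexI[of _ x]) auto
  ultimately show False unfolding p_def by simp
qed

lemma form_expand:
  "form_eval d c (x, y, z) = (\<Sum>k\<le>d. (\<Sum>i\<le>d-k. c (i, d-k-i, k) * x^i * y^(d-k-i)) * z^k)"
proof -
  define f where "f = (\<lambda>(k::nat, i::nat). (i, d-k-i, k))"
  have M: "mons d = f ` (SIGMA k:{..d}. {..d-k})"
  proof
    show "mons d \<subseteq> f ` (SIGMA k:{..d}. {..d-k})"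
    proof
      fix m assume "m \<in> mons d"
      then obtain i j k where m: "m = (i,j,k)" "i + j + k = d" by (cases m) (auto simp: mons_def)
      then show "m \<in> f ` (SIGMA k:{..d}. {..d-k})"
        by (intro image_eqI[of _ _ "(k,i)"]) (auto simp: f_def)
    qed
  qed (auto simp: f_def mons_def)
  have inj: "inj_on f (SIGMA k:{..d}. {..d-k})" by (auto simp: inj_on_def f_def)
  have "form_eval d c (x,y,z) = (\<Sum>p\<in>(SIGMA k:{..d}. {..d-k}). c (f p) * mon (f p) (x,y,z))"
    unfolding form_eval_mon M by (simp add: sum.reindex[OF inj])
  also have "\<dots> = (\<Sum>(k,i)\<in>(SIGMA k:{..d}. {..d-k}). c (i, d-k-i, k) * x^i * y^(d-k-i) * z^k)"
    by (intro sum.cong refl) (auto simp: f_def mon_def mult.assoc)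
  also have "\<dots> = (\<Sum>k\<le>d. \<Sum>i\<le>d-k. c (i, d-k-i, k) * x^i * y^(d-k-i) * z^k)"
    by (rule sum.Sigma[symmetric]) auto
  finally show ?thesis by (simp add: sum_distrib_right)
qed

lemma form_zero:
  assumes inf: "infinite (UNIV::'a set)"
    and z: "\<forall>v. form_eval d c v = (0::'a::field)" and m: "m \<in> mons d"
  shows "c m = 0"
proof -
  obtain i j k where m': "m = (i,j,k)" "i + j + k = d" using m by (cases m) (auto simp: mons_def)
  have A: "(\<Sum>i\<le>d-k. c (i, d-k-i, k) * x^i * y^(d-k-i)) = 0" for x y
    using uni_zero[OF inf, where n=d and a="\<lambda>k. (\<Sum>i\<le>d-k. c (i, d-k-i, k) * x^i * y^(d-k-i))" and i=k] z m'
    by (auto simp: form_expand)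
  have "c (i, d-k-i, k) = 0"
    using uni_zero[OF inf, where n="d-k" and a="\<lambda>i. c (i, d-k-i, k)" and i=i] A[of _ 1] m' by (auto simp: mult.commute)
  moreover have "d - k - i = j" using m'(2) by simp
  ultimately show ?thesis using m'(1) by simp
qed

lemma form_zero_fun: "\<not> nonzero_form d c \<Longrightarrow> form_eval d c v = 0"
  unfolding nonzero_form_def form_eval_mon by auto

definition sh :: "nat \<times> nat \<times> nat \<Rightarrow> nat \<times> nat \<times> nat" where
  "sh m = (fst m, fst (snd m), Suc (snd (snd m)))"

lemma form_shift:
  assumes "\<forall>m\<in>mons (Suc d). snd (snd m) = 0 \<longrightarrow> g m = 0"
  shows "form_eval (Suc d) g v = snd (snd v) * form_eval d (\<lambda>m. g (sh m)) v"
proof -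
  have sub: "sh ` mons d \<subseteq> mons (Suc d)" by (auto simp: sh_def mons_def)
  have rest: "\<forall>m\<in>mons (Suc d) - sh ` mons d. g m * mon m v = 0"
  proof
    fix m assume m: "m \<in> mons (Suc d) - sh ` mons d"
    obtain i j k where mm: "m = (i,j,k)" by (cases m)
    have "k = 0"
    proof (rule ccontr)
      assume "k \<noteq> 0"
      then have "m = sh (i,j,k-1)" "(i,j,k-1) \<in> mons d" using m mm by (auto simp: sh_def mons_def)
      then show False using m by blast
    qed
    then show "g m * mon m v = 0" using assms m mm by auto
  qed
  have inj: "inj_on sh (mons d)" by (auto simp: inj_on_def sh_def)
  have "form_eval (Suc d) g v = (\<Sum>m\<in>sh ` mons d. g m * mon m v)"
    unfolding form_eval_mon by (rule sum.mono_neutral_right[OF finite_mons sub rest])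
  also have "\<dots> = (\<Sum>m\<in>mons d. g (sh m) * mon (sh m) v)" by (simp add: sum.reindex[OF inj])
  also have "\<dots> = snd (snd v) * form_eval d (\<lambda>m. g (sh m)) v"
    unfolding form_eval_mon sum_distrib_left by (intro sum.cong refl) (simp add: sh_def mon_def algebra_simps)
  finally show ?thesis .
qed

lemma aut_0: "field_aut \<sigma> \<Longrightarrow> \<sigma> 0 = 0"
proof -
  assume "field_aut \<sigma>"
  then have "\<sigma> (0 + 0) = \<sigma> 0 + \<sigma> 0" unfolding field_aut_def by blast
  then have "\<sigma> 0 = \<sigma> 0 + \<sigma> 0" by simp
  then show ?thesis by (metis add_cancel_right_right)
qed

lemma aut_eq0: "field_aut \<sigma> \<Longrightarrow> \<sigma> x = 0 \<longleftrightarrow> x = 0"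
  using aut_0[of \<sigma>] unfolding field_aut_def bij_def inj_def by metis

lemma aut_1: "field_aut \<sigma> \<Longrightarrow> \<sigma> 1 = 1"
proof -
  assume a: "field_aut \<sigma>"
  then have "\<sigma> (1 * 1) = \<sigma> 1 * \<sigma> 1" unfolding field_aut_def by blast
  moreover have "\<sigma> 1 \<noteq> 0" using aut_eq0[OF a, of 1] by simp
  ultimately show ?thesis by simp
qed

lemma aut_pow: "field_aut \<sigma> \<Longrightarrow> \<sigma> (x ^ n) = \<sigma> x ^ n"
  by (induction n) (auto simp: aut_1 field_aut_def)

lemma aut_sum: "field_aut \<sigma> \<Longrightarrow> \<sigma> (\<Sum>x\<in>A. f x) = (\<Sum>x\<in>A. \<sigma> (f x))"
  by (induction A rule: infinite_finite_induct) (auto simp: aut_0 field_aut_def)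

lemma form_eval_aut:
  assumes "field_aut \<sigma>"
  shows "\<sigma> (form_eval d c v) = form_eval d (\<sigma> \<circ> c) (pt_map \<sigma> v)"
  unfolding form_eval_mon aut_sum[OF assms]
  using assms by (intro sum.cong refl) (simp add: field_aut_def mon_def pt_map_def aut_pow)

lemma nonzero_form_aut:
  assumes "field_aut \<sigma>" "nonzero_form d c" shows "nonzero_form d (\<sigma> \<circ> c)"
  using assms aut_eq0[OF assms(1)] unfolding nonzero_form_def by auto

lemma form_eval_scale:
  "form_eval d c (k * x, k * y, k * z) = k ^ d * form_eval d c (x, y, z)"
  unfolding form_eval_mon sum_distrib_left
proof (intro sum.cong refl)
  fix m assume "m \<in> mons d"
  then have "d = fst m + fst (snd m) + snd (snd m)" by (auto simp: mons_def)
  then show "c m * mon m (k * x, k * y, k * z) = k ^ d * (c m * mon m (x, y, z))"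
    by (simp add: mon_def power_mult_distrib power_add algebra_simps)
qed

lemma prop_vanish:
  assumes "proportional v w" "form_eval d c v = 0" shows "form_eval d c w = 0"
proof -
  obtain k where k: "k \<noteq> 0" "v = (k * fst w, k * fst (snd w), k * snd (snd w))"
    using assms(1) unfolding proportional_def by blast
  then have "k ^ d * form_eval d c w = 0" using assms(2) form_eval_scale[of d c k] by (cases w) auto
  then show ?thesis using k by simp
qed

lemma gal_transfer:
  assumes "field_aut \<sigma>" "form_eval d l b = 0" "proportional (pt_map \<sigma> b) b'"
  shows "form_eval d (\<sigma> \<circ> l) b' = 0"
proof -
  have "form_eval d (\<sigma> \<circ> l) (pt_map \<sigma> b) = 0"
    using form_eval_aut[OF assms(1), of d l b] assms(2) aut_0[OF assms(1)] by simp
  then show ?thesis using prop_vanish assms(3) by blast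
qed

definition cross :: "'a::field pt \<Rightarrow> 'a pt \<Rightarrow> 'a pt" where
  "cross p q = (fst (snd p) * snd (snd q) - snd (snd p) * fst (snd q),
                snd (snd p) * fst q - fst p * snd (snd q),
                fst p * fst (snd q) - fst (snd p) * fst q)"

definition det3 :: "'a::field pt \<Rightarrow> 'a pt \<Rightarrow> 'a pt \<Rightarrow> 'a" where
  "det3 p q r = dot (cross p q) r"

definition lincomb :: "'a::field \<Rightarrow> 'a \<Rightarrow> 'a \<Rightarrow> 'a pt \<Rightarrow> 'a pt \<Rightarrow> 'a pt \<Rightarrow> 'a pt" where
  "lincomb s t u p q r = (s * fst p + t * fst q + u * fst r,
     s * fst (snd p) + t * fst (snd q) + u * fst (snd r),
     s * snd (snd p) + t * snd (snd q) + u * snd (snd r))"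

lemma det3_1: "det3 v q r = dot (cross q r) v"
  by (simp add: det3_def dot_def cross_def algebra_simps)
lemma det3_2: "det3 p v r = dot (cross r p) v"
  by (simp add: det3_def dot_def cross_def algebra_simps)
lemma det3_3: "det3 p q v = dot (cross p q) v"
  by (simp add: det3_def)

lemma det3_same12: "det3 p p r = 0" by (simp add: det3_def dot_def cross_def algebra_simps)
lemma det3_same13: "det3 p q p = 0" by (simp add: det3_def dot_def cross_def algebra_simps)
lemma det3_same23: "det3 p q q = 0" by (simp add: det3_def dot_def cross_def algebra_simps)

lemma cramer:
  assumes "det3 p q r \<noteq> 0"
  shows "lincomb (det3 v q r / det3 p q r) (det3 p v r / det3 p q r) (det3 p q v / det3 p q r) p q r = v"
proof -
  obtain p1 p2 p3 where p: "p = (p1,p2,p3)" by (cases p)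
  obtain q1 q2 q3 where q: "q = (q1,q2,q3)" by (cases q)
  obtain r1 r2 r3 where r: "r = (r1,r2,r3)" by (cases r)
  obtain v1 v2 v3 where v: "v = (v1,v2,v3)" by (cases v)
  define D where "D = det3 p q r"
  have D: "D \<noteq> 0" using assms D_def by simp
  have e1: "det3 v q r * p1 + det3 p v r * q1 + det3 p q v * r1 = D * v1"
    unfolding D_def p q r v by (simp add: det3_def dot_def cross_def algebra_simps)
  have e2: "det3 v q r * p2 + det3 p v r * q2 + det3 p q v * r2 = D * v2"
    unfolding D_def p q r v by (simp add: det3_def dot_def cross_def algebra_simps)
  have e3: "det3 v q r * p3 + det3 p v r * q3 + det3 p q v * r3 = D * v3"
    unfolding D_def p q r v by (simp add: det3_def dot_def cross_def algebra_simps)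
  show ?thesis unfolding D_def[symmetric] lincomb_def
    using D e1 e2 e3 unfolding p q r v by (simp add: field_simps)
qed

lemma det_dep:
  assumes "dot n p = 0" "dot n q = 0" "dot n x = 0" "n \<noteq> (0,0,0)"
  shows "det3 p q x = 0"
proof (rule ccontr)
  assume D: "det3 p q x \<noteq> 0"
  obtain p1 p2 p3 where p: "p = (p1,p2,p3)" by (cases p)
  obtain q1 q2 q3 where q: "q = (q1,q2,q3)" by (cases q)
  obtain r1 r2 r3 where r: "x = (r1,r2,r3)" by (cases x)
  obtain n1 n2 n3 where n: "n = (n1,n2,n3)" by (cases n)
  have "det3 p q x * n1 = dot n p * fst (cross q x) + dot n q * fst (cross x p) + dot n x * fst (cross p q)"
    unfolding p q r n by (simp add: det3_def dot_def cross_def algebra_simps)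
  moreover have "det3 p q x * n2 = dot n p * fst (snd (cross q x)) + dot n q * fst (snd (cross x p)) + dot n x * fst (snd (cross p q))"
    unfolding p q r n by (simp add: det3_def dot_def cross_def algebra_simps)
  moreover have "det3 p q x * n3 = dot n p * snd (snd (cross q x)) + dot n q * snd (snd (cross x p)) + dot n x * snd (snd (cross p q))"
    unfolding p q r n by (simp add: det3_def dot_def cross_def algebra_simps)
  ultimately show False using assms D n by simp
qed

lemma cross_zero_prop:
  assumes "p \<noteq> (0,0,0)" "q \<noteq> (0,0,0)" "cross p q = (0,0,0)"
  shows "proportional q p"
proof -
  obtain a b c where p: "p = (a,b,c)" by (cases p)
  obtain x y z where q: "q = (x,y,z)" by (cases q)
  have e: "b * z = c * y" "c * x = a * z" "a * y = b * x" using assms(3) unfolding p q cross_def by auto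
  consider "a \<noteq> 0" | "b \<noteq> 0" | "c \<noteq> 0" using assms(1) p by auto
  then show ?thesis
  proof cases
    case 1
    have "q = ((x/a) * a, (x/a) * b, (x/a) * c)" using e 1 q by (auto simp: field_simps)
    moreover have "x / a \<noteq> 0" using assms(2) calculation 1 by auto
    ultimately show ?thesis unfolding proportional_def p by (intro exI[of _ "x/a"] conjI) simp_all
  next
    case 2
    have "q = ((y/b) * a, (y/b) * b, (y/b) * c)" using e 2 q by (auto simp: field_simps)
    moreover have "y / b \<noteq> 0" using assms(2) calculation 2 by auto
    ultimately show ?thesis unfolding proportional_def p by (intro exI[of _ "y/b"] conjI) simp_all
  next
    case 3
    have "q = ((z/c) * a, (z/c) * b, (z/c) * c)" using e 3 q by (auto simp: field_simps)
    moreover have "z / c \<noteq> 0" using assms(2) calculation 3 by auto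
    ultimately show ?thesis unfolding proportional_def p by (intro exI[of _ "z/c"] conjI) simp_all
  qed
qed

lemma is_form_id: "is_form d (\<lambda>v. form_eval d c v)"
  unfolding is_form_def by blast

lemma is_form_dot_scaled: "is_form 1 (\<lambda>v. dot n v / k)"
  using is_form_scale[OF is_form_lin, of "1/k" n] by simp

lemma is_form_lincomb:
  assumes "is_form d f"
  shows "is_form d (\<lambda>v. f (lincomb (fst v) (fst (snd v)) (snd (snd v)) p q r))"
proof -
  have "is_form d (\<lambda>v. f (dot (fst p, fst q, fst r) v, dot (fst (snd p), fst (snd q), fst (snd r)) v,
          dot (snd (snd p), snd (snd q), snd (snd r)) v))"
    by (intro is_form_subst assms is_form_lin)
  then show ?thesis by (simp add: lincomb_def dot_def algebra_simps)
qed

lemma form_at_z0: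
  "form_eval d g (s, t, 0) = (\<Sum>i\<le>d. g (i, d-i, 0) * s^i * t^(d-i))"
proof -
  have "form_eval d g (s, t, 0) = (\<Sum>k\<le>d. (\<Sum>i\<le>d-k. g (i, d-k-i, k) * s^i * t^(d-k-i)) * 0^k)"
    by (rule form_expand)
  also have "\<dots> = (\<Sum>k\<in>{0}. (\<Sum>i\<le>d-k. g (i, d-k-i, k) * s^i * t^(d-k-i)) * 0^k)"
    by (rule sum.mono_neutral_right) auto
  finally show ?thesis by simp
qed

lemma reducible:
  assumes inf: "infinite (UNIV::'a::field set)" and nz: "nonzero_form 3 c"
    and L: "is_form 1 L" and Q: "is_form 2 Qf" and F: "\<forall>v. form_eval 3 c v = L v * Qf v"
  shows "\<not> abs_irreducible_cubic (c :: _ \<Rightarrow> 'a)"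
proof -
  obtain l where l: "\<forall>v. L v = form_eval 1 l v" using L unfolding is_form_def by blast
  obtain q where q: "\<forall>v. Qf v = form_eval 2 q v" using Q unfolding is_form_def by blast
  have Fnz: "\<not> (\<forall>v. form_eval 3 c v = 0)"
    using form_zero[OF inf] nz unfolding nonzero_form_def by blast
  have "nonzero_form 1 l"
  proof (rule ccontr)
    assume a: "\<not> nonzero_form 1 l"
    have "\<forall>v. form_eval 3 c v = 0" using F l form_zero_fun[OF a] by (metis mult_zero_left)
    then show False using Fnz by blast
  qed
  moreover have "nonzero_form 2 q"
  proof (rule ccontr)
    assume a: "\<not> nonzero_form 2 q"
    have "\<forall>v. form_eval 3 c v = 0" using F q form_zero_fun[OF a] by (metis mult_zero_right)
    then show False using Fnz by blast
  qed
  ultimately show ?thesis unfolding abs_irreducible_cubic_def using F l q by auto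
qed

lemma dehom:
  fixes s t :: "'a::field"
  assumes "t \<noteq> 0"
  shows "(\<Sum>i\<le>d. a i * s^i * t^(d-i)) = t^d * (\<Sum>i\<le>d. a i * (s/t)^i)"
  unfolding sum_distrib_left
proof (intro sum.cong refl)
  fix i assume "i \<in> {..d}"
  then have "t^d = t^i * t^(d-i)" by (simp add: power_add[symmetric])
  then show "a i * s^i * t^(d-i) = t^d * (a i * (s/t)^i)"
    using assms by (simp add: power_divide field_simps)
qed

lemma lincomb0: "lincomb s t 0 p q r = lincomb s t 0 p q r' "
  by (simp add: lincomb_def)

lemma line_lemma:
  fixes c :: "nat \<times> nat \<times> nat \<Rightarrow> 'a::field"
  assumes inf: "infinite (UNIV::'a set)"
    and pq: "p \<noteq> (0,0,0)" "q \<noteq> (0,0,0)" "\<not> proportional q p"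
    and X: "finite X" "card X \<ge> 4"
      "\<forall>x\<in>X. x \<noteq> (0,0,0) \<and> det3 p q x = 0 \<and> form_eval 3 c x = 0 \<and> \<not> proportional x p"
    and Xd: "\<forall>x\<in>X. \<forall>y\<in>X. proportional x y \<longrightarrow> x = y"
  shows "\<exists>L Qf. is_form 1 L \<and> is_form 2 Qf \<and> (\<forall>v. form_eval 3 c v = L v * Qf v)"
proof -
  have n: "cross p q \<noteq> (0,0,0)" using cross_zero_prop pq by blast
  obtain r where r: "det3 p q r \<noteq> 0"
  proof -
    have "det3 p q (1,0,0) = fst (cross p q)" "det3 p q (0,1,0) = fst (snd (cross p q))"
      "det3 p q (0,0,1) = snd (snd (cross p q))" by (simp_all add: det3_def dot_def)
    then show ?thesis using n that by (cases "cross p q") auto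
  qed
  define D where "D = det3 p q r"
  define Sx where "Sx = (\<lambda>v. det3 v q r / D)"
  define Tx where "Tx = (\<lambda>v. det3 p v r / D)"
  define Ux where "Ux = (\<lambda>v. det3 p q v / D)"
  have cr: "lincomb (Sx v) (Tx v) (Ux v) p q r = v" for v
    unfolding Sx_def Tx_def Ux_def D_def by (rule cramer[OF r])
  define G where "G = (\<lambda>w. form_eval 3 c (lincomb (fst w) (fst (snd w)) (snd (snd w)) p q r))"
  have "is_form 3 G" unfolding G_def by (intro is_form_lincomb is_form_id)
  then obtain g where g: "\<forall>w. G w = form_eval 3 g w" unfolding is_form_def by blast
  have Fv: "form_eval 3 c v = form_eval 3 g (Sx v, Tx v, Ux v)" for v
    using g[rule_format, of "(Sx v, Tx v, Ux v)"] cr[of v] unfolding G_def by simp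
  have U0: "Ux x = 0" if "x \<in> X" for x using X(3) that unfolding Ux_def by simp
  have xe: "x = lincomb (Sx x) (Tx x) 0 p q r" if "x \<in> X" for x
    using cr[of x] U0[OF that] by simp
  have T0: "Tx x \<noteq> 0" if "x \<in> X" for x
  proof
    assume T: "Tx x = 0"
    have x: "x = (Sx x * fst p, Sx x * fst (snd p), Sx x * snd (snd p))"
      using xe[OF that] T by (simp add: lincomb_def)
    then have "Sx x \<noteq> 0" using X(3) that by auto
    then have "proportional x p" unfolding proportional_def using x by blast
    then show False using X(3) that by blast
  qed
  define \<rho> where "\<rho> = (\<lambda>x. Sx x / Tx x)"
  have roots: "(\<Sum>i\<le>3. g (i, 3-i, 0) * (\<rho> x)^i) = 0" if "x \<in> X" for x
  proof -
    have "0 = form_eval 3 g (Sx x, Tx x, 0)" using Fv[of x] X(3) that U0[OF that] by simp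
    also have "\<dots> = Tx x ^ 3 * (\<Sum>i\<le>3. g (i, 3-i, 0) * (\<rho> x)^i)"
      unfolding form_at_z0 \<rho>_def by (rule dehom[OF T0[OF that]])
    finally show ?thesis using T0[OF that] by simp
  qed
  have inj: "inj_on \<rho> X"
  proof (rule inj_onI)
    fix x y assume xy: "x \<in> X" "y \<in> X" "\<rho> x = \<rho> y"
    define k where "k = Tx x / Tx y"
    have k: "k \<noteq> 0" using T0 xy unfolding k_def by simp
    have sx: "Sx x = \<rho> x * Tx x" "Sx y = \<rho> y * Tx y" unfolding \<rho>_def using T0 xy by auto
    obtain a tx ty where a: "a = \<rho> x" "tx = Tx x" "ty = Tx y" by blast
    have ty: "ty \<noteq> 0" using a T0 xy by simp
    have ex: "x = (a * tx * fst p + tx * fst q, a * tx * fst (snd p) + tx * fst (snd q),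
        a * tx * snd (snd p) + tx * snd (snd q))"
      using xe[OF xy(1)] sx a by (simp add: lincomb_def)
    have ey: "y = (a * ty * fst p + ty * fst q, a * ty * fst (snd p) + ty * fst (snd q),
        a * ty * snd (snd p) + ty * snd (snd q))"
      using xe[OF xy(2)] sx a xy(3) by (simp add: lincomb_def)
    have "x = (k * fst y, k * fst (snd y), k * snd (snd y))"
      unfolding k_def a(2,3)[symmetric] using ty by (simp only: ex ey) (simp add: field_simps)
    then have "proportional x y" unfolding proportional_def using k by blast
    then show "x = y" using Xd xy by blast
  qed
  have gz: "g (i, 3-i, 0) = 0" if "i \<le> 3" for i
  proof (rule uni_roots[where R="\<rho> ` X" and n=3 and a="\<lambda>i. g (i, 3-i, 0)"])
    show "finite (\<rho> ` X)" using X by simp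
    show "card (\<rho> ` X) > 3" using X card_image[OF inj] by simp
    show "\<forall>t\<in>\<rho> ` X. (\<Sum>i\<le>3. g (i, 3-i, 0) * t^i) = 0" using roots by auto
  qed fact
  have gz': "\<forall>m\<in>mons (Suc 2). snd (snd m) = 0 \<longrightarrow> g m = 0"
  proof (intro ballI impI)
    fix m assume m: "m \<in> mons (Suc 2)" "snd (snd m) = 0"
    then obtain i j where "m = (i, j, 0)" "i + j = 3" by (cases m) (auto simp: mons_def)
    moreover have "3 - i = j" using calculation(2) by simp
    ultimately show "g m = 0" using gz[of i] by simp
  qed
  have sh3: "form_eval 3 g w = snd (snd w) * form_eval 2 (\<lambda>m. g (sh m)) w" for w
    using form_shift[OF gz', of w] by (simp add: numeral_3_eq_3)
  have "is_form 1 Sx" unfolding Sx_def det3_1 by (rule is_form_dot_scaled)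
  moreover have "is_form 1 Tx" unfolding Tx_def det3_2 by (rule is_form_dot_scaled)
  moreover have LU: "is_form 1 Ux" unfolding Ux_def det3_3 by (rule is_form_dot_scaled)
  ultimately have "is_form 2 (\<lambda>v. form_eval 2 (\<lambda>m. g (sh m)) (Sx v, Tx v, Ux v))"
    by (intro is_form_subst is_form_id)
  moreover have "\<forall>v. form_eval 3 c v = Ux v * form_eval 2 (\<lambda>m. g (sh m)) (Sx v, Tx v, Ux v)"
    using Fv sh3 by simp
  ultimately show ?thesis using LU by blast
qed

lemma le3_cases: "(i::nat) \<le> 3 \<Longrightarrow> i = 0 \<or> i = 1 \<or> i = 2 \<or> i = 3" by auto

lemma mons3: "mons 3 = {(3,0,0),(0,3,0),(0,0,3),(2,1,0),(2,0,1),(1,2,0),(0,2,1),(1,0,2),(0,1,2),(1,1,1)}"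
proof
  show "mons 3 \<subseteq> {(3,0,0),(0,3,0),(0,0,3),(2,1,0),(2,0,1),(1,2,0),(0,2,1),(1,0,2),(0,1,2),(1,1,1)}"
  proof
    fix m assume "m \<in> mons 3"
    then obtain i j k where m: "m = (i,j,k)" "i + j + k = 3" by (cases m) (auto simp: mons_def)
    then have "i \<le> 3" "j \<le> 3" by auto
    then show "m \<in> {(3,0,0),(0,3,0),(0,0,3),(2,1,0),(2,0,1),(1,2,0),(0,2,1),(1,0,2),(0,1,2),(1,1,1)}"
      using m by (elim le3_cases[elim_format] disjE) auto
  qed
qed (auto simp: mons_def)

lemma form3: "form_eval 3 f (x,y,z) = f (3,0,0) * x^3 + f (0,3,0) * y^3 + f (0,0,3) * z^3
  + f (2,1,0) * x^2 * y + f (2,0,1) * x^2 * z + f (1,2,0) * x * y^2 + f (0,2,1) * y^2 * z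
  + f (1,0,2) * x * z^2 + f (0,1,2) * y * z^2 + f (1,1,1) * x * y * z"
  unfolding form_eval_mon mons3 by (simp add: mon_def algebra_simps)

lemma form2: "form_eval 2 f (x,y,z) = f (2,0,0) * x^2 + f (0,2,0) * y^2 + f (0,0,2) * z^2
  + f (1,1,0) * x * y + f (1,0,1) * x * z + f (0,1,1) * y * z"
  unfolding form_eval_mon mons2 by (simp add: mon_def algebra_simps)

definition Qs :: "'a::field \<Rightarrow> 'a \<Rightarrow> 'a \<Rightarrow> 'a pt \<Rightarrow> 'a" where
  "Qs a b c v = a * fst (snd v) * snd (snd v) + b * fst v * snd (snd v) + c * fst v * fst (snd v)"

lemma add_eq0_neg: "(A::'a::ab_group_add) + B = 0 \<Longrightarrow> A = - B"
  by (simp add: eq_neg_iff_add_eq_0)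

lemma conic_key:
  fixes a b c r1 r2 r3 r4 w1 w2 w3 :: "'a::field"
  assumes nz: "w1 \<noteq> 0" "w2 \<noteq> 0" "c \<noteq> 0"
    and E: "a * w2 * w3 + b * w1 * w3 + c * w1 * w2 = 0"
    and R: "r1 * w1^2 * w3 + r2 * w2^2 * w3 + r3 * w1 * w3^2 + r4 * w1 * w2 * w3 = 0"
  shows "(- b * r1) + (- a * r1 + c * r3 - b * r4) * (w2/w1) + (- b * r2 - a * r4) * (w2/w1)^2
     + (- a * r2) * (w2/w1)^3 = 0"
proof -
  define K where "K = w3 * (a * w2 + b * w1)"
  have h0: "K + c * w1 * w2 = 0" using E unfolding K_def by (simp add: algebra_simps)
  have "K = (K + c * w1 * w2) - c * w1 * w2" by simp
  also have "\<dots> = - c * w1 * w2" using h0 by simp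
  finally have K: "K = - c * w1 * w2" .
  define M where "M = r1 * w1^2 + r2 * w2^2 + r4 * w1 * w2"
  have "(r1 * w1^2 * w3 + r2 * w2^2 * w3 + r3 * w1 * w3^2 + r4 * w1 * w2 * w3) * (a * w2 + b * w1)^2
      = K * (M * (a * w2 + b * w1) + r3 * w1 * K)"
    unfolding K_def M_def by (simp add: algebra_simps power2_eq_square)
  then have "0 = K * (M * (a * w2 + b * w1) + r3 * w1 * K)" using R by simp
  then have "0 = (- c * w1 * w2) * (M * (a * w2 + b * w1) + r3 * w1 * (- c * w1 * w2))" using K by simp
  then have h: "M * (a * w2 + b * w1) + r3 * w1 * (- c * w1 * w2) = 0" using nz by simp
  have "M * (a * w2 + b * w1) + r3 * w1 * (- c * w1 * w2) =
     - (((- b * r1) + (- a * r1 + c * r3 - b * r4) * (w2/w1) + (- b * r2 - a * r4) * (w2/w1)^2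
     + (- a * r2) * (w2/w1)^3) * w1^3)"
    unfolding M_def using nz by (simp add: field_simps power2_eq_square power3_eq_cube)
  then show ?thesis using h nz by simp
qed

lemma conic_core:
  fixes f :: "nat \<times> nat \<times> nat \<Rightarrow> 'a::field"
  assumes abc: "a \<noteq> 0" "b \<noteq> 0" "c \<noteq> 0"
    and f0: "f (3,0,0) = 0" "f (0,3,0) = 0" "f (0,0,3) = 0"
    and W: "finite W" "card W \<ge> 4"
      "\<forall>w\<in>W. fst w \<noteq> 0 \<and> fst (snd w) \<noteq> 0 \<and> snd (snd w) \<noteq> 0 \<and> Qs a b c w = 0 \<and> form_eval 3 f w = 0"
    and Wd: "\<forall>x\<in>W. \<forall>y\<in>W. proportional x y \<longrightarrow> x = y"
  shows "\<exists>n. \<forall>v. form_eval 3 f v = Qs a b c v * dot n v"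
proof -
  define \<alpha> where "\<alpha> = f (2,1,0) / c"
  define \<beta> where "\<beta> = f (1,2,0) / c"
  define \<gamma> where "\<gamma> = f (0,1,2) / a"
  define r1 where "r1 = f (2,0,1) - b * \<alpha>"
  define r2 where "r2 = f (0,2,1) - a * \<beta>"
  define r3 where "r3 = f (1,0,2) - b * \<gamma>"
  define r4 where "r4 = f (1,1,1) - (a * \<alpha> + b * \<beta> + c * \<gamma>)"
  have ident: "form_eval 3 f (x,y,z) = Qs a b c (x,y,z) * dot (\<alpha>,\<beta>,\<gamma>) (x,y,z)
     + (r1 * x^2 * z + r2 * y^2 * z + r3 * x * z^2 + r4 * x * y * z)" for x y z
    unfolding form3 Qs_def dot_def r1_def r2_def r3_def r4_def \<alpha>_def \<beta>_def \<gamma>_def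
    using abc f0 by (simp add: field_simps power2_eq_square power3_eq_cube)
  define t where "t = (\<lambda>w::'a pt. fst (snd w) / fst w)"
  define P where "P = (\<lambda>i::nat. if i = 0 then - b * r1 else if i = 1 then - a * r1 + c * r3 - b * r4
     else if i = 2 then - b * r2 - a * r4 else - a * r2)"
  have Psum: "(\<Sum>i\<le>3. P i * s^i) = P 0 + P 1 * s + P 2 * s^2 + P 3 * s^3" for s
    by (simp add: numeral_3_eq_3 numeral_2_eq_2 atMost_Suc)
  have roots: "(\<Sum>i\<le>3. P i * (t w)^i) = 0" if "w \<in> W" for w
  proof -
    obtain w1 w2 w3 where w: "w = (w1,w2,w3)" by (cases w)
    have h: "w1 \<noteq> 0" "w2 \<noteq> 0" "w3 \<noteq> 0" "a * w2 * w3 + b * w1 * w3 + c * w1 * w2 = 0"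
      "form_eval 3 f (w1,w2,w3) = 0" using W(3) that w by (auto simp: Qs_def)
    then have "r1 * w1^2 * w3 + r2 * w2^2 * w3 + r3 * w1 * w3^2 + r4 * w1 * w2 * w3 = 0"
      using ident[of w1 w2 w3] by (simp add: Qs_def)
    from conic_key[OF h(1,2) abc(3) h(4) this] show ?thesis
      unfolding Psum by (simp add: P_def t_def w)
  qed
  have inj: "inj_on t W"
  proof (rule inj_onI)
    fix x y assume xy: "x \<in> W" "y \<in> W" "t x = t y"
    obtain x1 x2 x3 where x: "x = (x1,x2,x3)" by (cases x)
    obtain y1 y2 y3 where y: "y = (y1,y2,y3)" by (cases y)
    have hx: "x1 \<noteq> 0" "x2 \<noteq> 0" "x3 \<noteq> 0" "a * x2 * x3 + b * x1 * x3 + c * x1 * x2 = 0"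
      using W(3) xy x by (auto simp: Qs_def)
    have hy: "y1 \<noteq> 0" "y2 \<noteq> 0" "y3 \<noteq> 0" "a * y2 * y3 + b * y1 * y3 + c * y1 * y2 = 0"
      using W(3) xy y by (auto simp: Qs_def)
    define k where "k = y1 / x1"
    have k: "k \<noteq> 0" using hx hy k_def by simp
    have y1: "y1 = k * x1" using hx k_def by simp
    have y2: "y2 = k * x2" using xy(3) hx hy unfolding t_def x y k_def by (simp add: field_simps)
    have dx: "a * x2 + b * x1 \<noteq> 0"
    proof
      assume "a * x2 + b * x1 = 0"
      then have "x3 * (a * x2 + b * x1) = 0" by simp
      then have "c * x1 * x2 = 0" using hx(4) by (simp add: algebra_simps)
      then show False using hx abc by simp
    qed
    have "y3 * (k * (a * x2 + b * x1)) + c * k * k * x1 * x2 = 0"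
      using hy(4) unfolding y1 y2 by (simp add: algebra_simps)
    then have A: "y3 * (k * (a * x2 + b * x1)) = - (c * k * k * x1 * x2)" by (rule add_eq0_neg)
    have "x3 * (a * x2 + b * x1) + c * x1 * x2 = 0" using hx(4) by (simp add: algebra_simps)
    then have B: "x3 * (a * x2 + b * x1) = - (c * x1 * x2)" by (rule add_eq0_neg)
    have "k * (k * x3) * (a * x2 + b * x1) = k * k * (x3 * (a * x2 + b * x1))"
      by (simp add: algebra_simps)
    also have "\<dots> = - (c * k * k * x1 * x2)" unfolding B by (simp add: algebra_simps)
    finally have "y3 * (k * (a * x2 + b * x1)) = k * (k * x3) * (a * x2 + b * x1)"
      using A by simp
    then have y3: "y3 = k * x3" using k dx by simp
    have "proportional y x" unfolding proportional_def x y using k y1 y2 y3 by auto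
    then show "x = y" using Wd xy by metis
  qed
  have Pz: "P i = 0" if "i \<le> 3" for i
  proof (rule uni_roots[where R="t ` W" and n=3 and a=P])
    show "finite (t ` W)" using W by simp
    show "card (t ` W) > 3" using W card_image[OF inj] by simp
    show "\<forall>s\<in>t ` W. (\<Sum>i\<le>3. P i * s^i) = 0" using roots by auto
  qed fact
  have "r2 = 0" using Pz[of 3] abc by (simp add: P_def)
  moreover have "r1 = 0" using Pz[of 0] abc by (simp add: P_def)
  moreover have "r4 = 0" using Pz[of 2] abc \<open>r2 = 0\<close> by (simp add: P_def)
  moreover have "r3 = 0" using Pz[of 1] abc \<open>r1 = 0\<close> \<open>r4 = 0\<close> by (simp add: P_def)
  ultimately have "\<forall>v. form_eval 3 f v = Qs a b c v * dot (\<alpha>,\<beta>,\<gamma>) v"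
    using ident by auto
  then show ?thesis by blast
qed

lemma even3:
  assumes "a \<in> B" "b \<in> B" "c \<in> B" "a \<noteq> b" "a \<noteq> c" "b \<noteq> c"
  shows "(transpose a c \<circ> transpose a b) permutes B" "evenperm (transpose a c \<circ> transpose a b)"
    "(transpose a c \<circ> transpose a b) a = b" "\<And>x. x \<notin> {a,b,c} \<Longrightarrow> (transpose a c \<circ> transpose a b) x = x"
proof -
  show "(transpose a c \<circ> transpose a b) permutes B"
    using assms by (intro permutes_compose permutes_swap_id)
  show "evenperm (transpose a c \<circ> transpose a b)"
    using assms by (simp add: evenperm_comp permutation_swap_id evenperm_swap)
  show "(transpose a c \<circ> transpose a b) a = b" using assms by simp
  show "\<And>x. x \<notin> {a,b,c} \<Longrightarrow> (transpose a c \<circ> transpose a b) x = x" by simp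
qed

lemma card_insert_le_Suc: "card (insert a A) \<le> Suc (card A)"
  by (cases "finite A") (auto simp: card_insert_if)

lemma card4: "card {a,b,c,d} \<le> 4"
  using card_length[of "[a,b,c,d]"] by simp

lemma card2: "card {a,b} \<le> 2"
  using card_length[of "[a,b]"] by simp

lemma exists_other:
  assumes "finite B" "card A < card B" "finite A" shows "\<exists>y\<in>B. y \<notin> A"
proof (rule ccontr)
  assume "\<not> ?thesis"
  then have "B \<subseteq> A" by blast
  then show False using card_mono[OF assms(3)] assms(2) by (simp add: not_le[symmetric])
qed

lemma noncol_det:
  assumes "\<forall>x\<in>X. form_eval 1 l x = 0" "nonzero_form 1 l" "p \<in> X" "q \<in> X" "x \<in> X"
  shows "det3 p q x = 0"
proof -
  have h: "\<forall>x\<in>X. dot (lv l) x = 0" using assms(1) unfolding form1 .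
  have "lv l \<noteq> (0,0,0)" using assms(2) unfolding nonzero_form1 .
  then show ?thesis using h assms(3-5) by (intro det_dep[of "lv l"]) auto
qed

lemma partA:
  fixes c :: "nat \<times> nat \<times> nat \<Rightarrow> 'a::field"
  assumes inf: "infinite (UNIV::'a set)" and nz3: "nonzero_form 3 c"
    and irr: "abs_irreducible_cubic c"
    and Bc: "\<forall>b\<in>B. b \<noteq> (0,0,0) \<and> form_eval 3 c b = 0"
    and dist: "\<forall>b\<in>B. \<forall>b'\<in>B. proportional b b' \<longrightarrow> b = b'"
    and card: "card B = 7"
    and even: "\<And>\<pi>. \<pi> permutes B \<Longrightarrow> evenperm \<pi> \<Longrightarrow>
       (\<exists>\<sigma>. field_aut \<sigma> \<and> (\<forall>b\<in>B. proportional (pt_map \<sigma> b) (\<pi> b)))"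
  shows "\<forall>S\<subseteq>B. card S = 3 \<longrightarrow> \<not> (\<exists>l. nonzero_form 1 l \<and> (\<forall>v\<in>S. form_eval 1 l v = 0))"
proof (intro allI impI notI)
  fix S assume S: "S \<subseteq> B" "card S = 3" and "\<exists>l. nonzero_form 1 l \<and> (\<forall>v\<in>S. form_eval 1 l v = 0)"
  then obtain l where l: "nonzero_form 1 l" "\<forall>v\<in>S. form_eval 1 l v = 0" by blast
  have finB: "finite B" using card by (intro card_ge_0_finite) simp
  obtain p q r where pqr: "S = {p,q,r}" "p \<noteq> q" "q \<noteq> r" "p \<noteq> r"
    using S(2) unfolding card_3_iff by blast
  have inB: "p \<in> B" "q \<in> B" "r \<in> B" using S pqr by auto
  have allx: "det3 p q x = 0" if x: "x \<in> B" for x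
  proof -
    consider "x = p" | "x = q" | "x = r" | "x \<notin> {p,q,r}" by blast
    then show ?thesis
    proof cases
      case 1 then show ?thesis by (simp add: det3_same13)
    next
      case 2 then show ?thesis by (simp add: det3_same23)
    next
      case 3 show ?thesis by (rule noncol_det[OF l(2) l(1)]) (simp_all add: pqr 3)
    next
      case 4
      have "card {p,q,r,x} < card B" using card card4[of p q r x] by simp
      then obtain y where y: "y \<in> B" "y \<notin> {p,q,r,x}"
        using exists_other[OF finB] by blast
      define \<pi> where "\<pi> = transpose r y \<circ> transpose r x"
      have dif: "r \<noteq> x" "r \<noteq> y" "x \<noteq> y" using y 4 by auto
      note E = even3[OF inB(3) x y(1) dif, folded \<pi>_def]
      have "p \<notin> {r,x,y}" "q \<notin> {r,x,y}" using y 4 pqr by auto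
      then have \<pi>: "\<pi> permutes B" "evenperm \<pi>" "\<pi> r = x" "\<pi> p = p" "\<pi> q = q"
        using E by blast+
      obtain \<sigma> where \<sigma>: "field_aut \<sigma>" "\<forall>b\<in>B. proportional (pt_map \<sigma> b) (\<pi> b)"
        using even[OF \<pi>(1,2)] by blast
      have van: "\<forall>v\<in>{p,q,x}. form_eval 1 (\<sigma> \<circ> l) v = 0"
      proof -
        have h: "form_eval 1 (\<sigma> \<circ> l) (\<pi> b) = 0" if "b \<in> S" for b
          using gal_transfer[OF \<sigma>(1) l(2)[rule_format, OF that]] \<sigma>(2) S(1) that by blast
        have "form_eval 1 (\<sigma> \<circ> l) (\<pi> p) = 0" by (rule h) (simp add: pqr)
        moreover have "form_eval 1 (\<sigma> \<circ> l) (\<pi> q) = 0" by (rule h) (simp add: pqr)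
        moreover have "form_eval 1 (\<sigma> \<circ> l) (\<pi> r) = 0" by (rule h) (simp add: pqr)
        ultimately show ?thesis using \<pi>(3-5) by simp
      qed
      show ?thesis by (rule noncol_det[OF van nonzero_form_aut[OF \<sigma>(1) l(1)]]) simp_all
    qed
  qed
  have "\<exists>L Qf. is_form 1 L \<and> is_form 2 Qf \<and> (\<forall>v. form_eval 3 c v = L v * Qf v)"
  proof (rule line_lemma[OF inf, where X="B - {p}"])
    show "p \<noteq> (0,0,0)" "q \<noteq> (0,0,0)" using Bc inB by blast+
    show "\<not> proportional q p" using dist inB pqr by blast
    show "finite (B - {p})" using finB by simp
    show "card (B - {p}) \<ge> 4" using card inB finB by (simp add: card_Diff_singleton)
    show "\<forall>x\<in>B - {p}. x \<noteq> (0,0,0) \<and> det3 p q x = 0 \<and> form_eval 3 c x = 0 \<and> \<not> proportional x p"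
    proof
      fix x assume x: "x \<in> B - {p}"
      then have "\<not> proportional x p" using dist inB by blast
      then show "x \<noteq> (0,0,0) \<and> det3 p q x = 0 \<and> form_eval 3 c x = 0 \<and> \<not> proportional x p"
        using Bc allx x by blast
    qed
    show "\<forall>x\<in>B - {p}. \<forall>y\<in>B - {p}. proportional x y \<longrightarrow> x = y" using dist by blast
  qed
  then show False using reducible[OF inf nz3] irr by blast
qed

definition iota :: "'a::field pt \<Rightarrow> 'a pt" where
  "iota w = (fst (snd w) * snd (snd w), fst w * snd (snd w), fst w * fst (snd w))"

lemma dot_lincomb: "dot (lincomb s t u P Q R) v = s * dot P v + t * dot Q v + u * dot R v"
  by (simp add: dot_def lincomb_def algebra_simps)

lemma lincomb_scale: "lincomb (k*s) (k*t) (k*u) p q r =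
   (k * fst (lincomb s t u p q r), k * fst (snd (lincomb s t u p q r)), k * snd (snd (lincomb s t u p q r)))"
  by (simp add: lincomb_def algebra_simps)

lemma Qs_iota: "Qs a b c w = dot (a,b,c) (iota w)"
  by (simp add: Qs_def dot_def iota_def algebra_simps)

lemma iota_nz: "fst w \<noteq> 0 \<Longrightarrow> fst (snd w) \<noteq> 0 \<Longrightarrow> snd (snd w) \<noteq> 0 \<Longrightarrow> iota w \<noteq> (0,0,0)"
  by (simp add: iota_def)

lemma iota_prop:
  assumes "fst w \<noteq> 0" "fst (snd w) \<noteq> 0" "snd (snd w) \<noteq> 0"
    "fst w' \<noteq> 0" "fst (snd w') \<noteq> 0" "snd (snd w') \<noteq> 0"
    "proportional (iota w) (iota w')"
  shows "proportional w w'"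
proof -
  obtain w1 w2 w3 where w: "w = (w1,w2,w3)" by (cases w)
  obtain v1 v2 v3 where w': "w' = (v1,v2,v3)" by (cases w')
  obtain k where k: "k \<noteq> 0" "w2 * w3 = k * (v2 * v3)" "w1 * w3 = k * (v1 * v3)" "w1 * w2 = k * (v1 * v2)"
    using assms(7) unfolding proportional_def iota_def w w' by auto
  have nz: "w1 \<noteq> 0" "w2 \<noteq> 0" "w3 \<noteq> 0" "v1 \<noteq> 0" "v2 \<noteq> 0" "v3 \<noteq> 0" using assms w w' by auto
  have "w2 * (w1 * v3) = (w1 * w2) * v3" by (simp add: algebra_simps)
  also have "\<dots> = v1 * (k * (v2 * v3))" unfolding k(4) by (simp add: algebra_simps)
  also have "\<dots> = w2 * (v1 * w3)" unfolding k(2)[symmetric] by (simp add: algebra_simps)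
  finally have e1: "w1 * v3 = v1 * w3" using nz by simp
  have "w1 * (w2 * v3) = (w1 * w2) * v3" by (simp add: algebra_simps)
  also have "\<dots> = v2 * (k * (v1 * v3))" unfolding k(4) by (simp add: algebra_simps)
  also have "\<dots> = w1 * (v2 * w3)" unfolding k(3)[symmetric] by (simp add: algebra_simps)
  finally have e2: "w2 * v3 = v2 * w3" using nz by simp
  define m where "m = w3 / v3"
  have "m \<noteq> 0" using nz m_def by simp
  moreover have "w1 = m * v1" "w2 = m * v2" "w3 = m * v3" using e1 e2 nz unfolding m_def
    by (simp_all add: field_simps)
  ultimately show ?thesis unfolding proportional_def w w' by auto
qed

lemma seven:
  assumes "card B = 7"
  obtains b1 b2 b3 b4 b5 b6 b7 where "B = {b1,b2,b3,b4,b5,b6,b7}" "distinct [b1,b2,b3,b4,b5,b6,b7]"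
proof -
  have finB: "finite B" using assms by (intro card_ge_0_finite) simp
  obtain xs where xs: "set xs = B" "distinct xs" using finite_distinct_list[OF finB] by blast
  have "length xs = 7" using distinct_card[OF xs(2)] xs(1) assms by simp
  then have "\<exists>b1 b2 b3 b4 b5 b6 b7. xs = [b1,b2,b3,b4,b5,b6,b7]"
    by (simp add: length_Suc_conv numeral_eq_Suc) blast
  then show ?thesis using that xs by auto
qed

lemma partB:
  fixes c :: "nat \<times> nat \<times> nat \<Rightarrow> 'a::field"
  assumes inf: "infinite (UNIV::'a set)" and nz3: "nonzero_form 3 c"
    and irr: "abs_irreducible_cubic c"
    and Bc: "\<forall>b\<in>B. b \<noteq> (0,0,0) \<and> form_eval 3 c b = 0"
    and dist: "\<forall>b\<in>B. \<forall>b'\<in>B. proportional b b' \<longrightarrow> b = b'"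
    and card: "card B = 7"
    and even: "\<And>\<pi>. \<pi> permutes B \<Longrightarrow> evenperm \<pi> \<Longrightarrow>
       (\<exists>\<sigma>. field_aut \<sigma> \<and> (\<forall>b\<in>B. proportional (pt_map \<sigma> b) (\<pi> b)))"
    and noncol: "\<forall>S\<subseteq>B. card S = 3 \<longrightarrow> \<not> (\<exists>l. nonzero_form 1 l \<and> (\<forall>v\<in>S. form_eval 1 l v = 0))"
  shows "\<forall>S\<subseteq>B. card S = 6 \<longrightarrow> \<not> (\<exists>q. nonzero_form 2 q \<and> (\<forall>v\<in>S. form_eval 2 q v = 0))"
proof (intro allI impI notI)
  fix S assume S: "S \<subseteq> B" "card S = 6" and "\<exists>q. nonzero_form 2 q \<and> (\<forall>v\<in>S. form_eval 2 q v = 0)"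
  then obtain Q0 where Q0: "nonzero_form 2 Q0" "\<forall>v\<in>S. form_eval 2 Q0 v = 0" by blast
  have finB: "finite B" using card by (intro card_ge_0_finite) simp
  have lin3: False if "dot m x = 0" "dot m y = 0" "dot m z = 0" "m \<noteq> (0,0,0)"
     "x \<in> B" "y \<in> B" "z \<in> B" "x \<noteq> y" "x \<noteq> z" "y \<noteq> z" for m x y z
  proof -
    have "card {x,y,z} = 3" using that by simp
    moreover have "nonzero_form 1 (lin_of m)" unfolding nonzero_form1 using that by simp
    moreover have "\<forall>v\<in>{x,y,z}. form_eval 1 (lin_of m) v = 0" unfolding form1 using that by simp
    moreover have "{x,y,z} \<subseteq> B" using that by simp
    ultimately show False using noncol[rule_format, of "{x,y,z}"] by blast
  qed
  have ndet: "det3 x y z \<noteq> 0" if "x \<in> B" "y \<in> B" "z \<in> B" "x \<noteq> y" "x \<noteq> z" "y \<noteq> z" for x y z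
  proof
    assume d: "det3 x y z = 0"
    have "cross x y \<noteq> (0,0,0)"
    proof
      assume "cross x y = (0,0,0)"
      moreover have "x \<noteq> (0,0,0)" "y \<noteq> (0,0,0)" using Bc that(1,2) by blast+
      ultimately have "proportional y x" using cross_zero_prop by blast
      then show False using dist that by blast
    qed
    moreover have "dot (cross x y) x = 0" "dot (cross x y) y = 0" "dot (cross x y) z = 0"
      using det3_same13[of x y] det3_same23[of x y] d unfolding det3_def by simp_all
    ultimately show False by (intro lin3[of "cross x y" x y z]) (use that in auto)
  qed
  obtain x0 where x0: "x0 \<in> B" "S = B - {x0}"
  proof -
    have "card (B - S) = 1" using card S finB by (simp add: card_Diff_subset finite_subset)
    then obtain x0 where "B - S = {x0}" by (auto simp: card_1_singleton_iff)
    then have "x0 \<in> B" "S = B - {x0}" using S(1) by auto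
    then show ?thesis using that by blast
  qed
  have conics: "\<exists>Q. nonzero_form 2 Q \<and> (\<forall>v\<in>B - {y}. form_eval 2 Q v = 0)" if y: "y \<in> B" for y
  proof (cases "y = x0")
    case True then show ?thesis using Q0 x0 by (intro exI[of _ Q0]) auto
  next
    case False
    have "card {x0, y} < card B" using card card2[of x0 y] by simp
    then obtain w where w: "w \<in> B" "w \<notin> {x0, y}" using exists_other[OF finB] by blast
    define \<pi> where "\<pi> = transpose x0 w \<circ> transpose x0 y"
    have dif: "x0 \<noteq> y" "x0 \<noteq> w" "y \<noteq> w" using False w by auto
    note E = even3[OF x0(1) y w(1) dif, folded \<pi>_def]
    obtain \<sigma> where \<sigma>: "field_aut \<sigma>" "\<forall>b\<in>B. proportional (pt_map \<sigma> b) (\<pi> b)"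
      using even[OF E(1,2)] by blast
    have "\<forall>v\<in>B - {y}. form_eval 2 (\<sigma> \<circ> Q0) v = 0"
    proof
      fix v assume v: "v \<in> B - {y}"
      then have "v \<in> \<pi> ` B" using permutes_image[OF E(1)] by simp
      then obtain b where b: "b \<in> B" "\<pi> b = v" by (auto simp: image_iff)
      have "b \<noteq> x0" using b E(3) v by auto
      then have Q0b: "form_eval 2 Q0 b = 0" using Q0 x0 b by blast
      show "form_eval 2 (\<sigma> \<circ> Q0) v = 0"
        using gal_transfer[OF \<sigma>(1) Q0b \<sigma>(2)[rule_format, OF b(1)]] b(2) by simp
    qed
    then show ?thesis using nonzero_form_aut[OF \<sigma>(1) Q0(1)] by blast
  qed
  obtain b1 b2 b3 b4 b5 b6 b7 where B7: "B = {b1,b2,b3,b4,b5,b6,b7}" "distinct [b1,b2,b3,b4,b5,b6,b7]"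
    by (rule seven[OF card])
  have inB: "b1 \<in> B" "b2 \<in> B" "b3 \<in> B" "b4 \<in> B" "b5 \<in> B" "b6 \<in> B" "b7 \<in> B" using B7 by auto
  have dB: "b1 \<noteq> b2" "b1 \<noteq> b3" "b1 \<noteq> b4" "b1 \<noteq> b5" "b1 \<noteq> b6" "b1 \<noteq> b7"
    "b2 \<noteq> b3" "b2 \<noteq> b4" "b2 \<noteq> b5" "b2 \<noteq> b6" "b2 \<noteq> b7"
    "b3 \<noteq> b4" "b3 \<noteq> b5" "b3 \<noteq> b6" "b3 \<noteq> b7"
    "b4 \<noteq> b5" "b4 \<noteq> b6" "b4 \<noteq> b7" "b5 \<noteq> b6" "b5 \<noteq> b7" "b6 \<noteq> b7" using B7(2) by auto
  define D where "D = det3 b1 b2 b3"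
  have D: "D \<noteq> 0" unfolding D_def by (rule ndet) (use inB dB in auto)
  define g1 where "g1 = (\<lambda>v. det3 v b2 b3 / D)"
  define g2 where "g2 = (\<lambda>v. det3 b1 v b3 / D)"
  define g3 where "g3 = (\<lambda>v. det3 b1 b2 v / D)"
  define \<beta> where "\<beta> = (\<lambda>v. (g1 v, g2 v, g3 v))"
  define Lc where "Lc = (\<lambda>w. lincomb (fst w) (fst (snd w)) (snd (snd w)) b1 b2 b3)"
  have Lb: "Lc (\<beta> v) = v" for v
    unfolding Lc_def \<beta>_def g1_def g2_def g3_def D_def using cramer D unfolding D_def by simp
  have g1f: "is_form 1 g1" unfolding g1_def det3_1 by (rule is_form_dot_scaled)
  have g2f: "is_form 1 g2" unfolding g2_def det3_2 by (rule is_form_dot_scaled)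
  have g3f: "is_form 1 g3" unfolding g3_def det3_3 by (rule is_form_dot_scaled)
  have \<beta>1: "\<beta> b1 = (1,0,0)" "\<beta> b2 = (0,1,0)" "\<beta> b3 = (0,0,1)"
    unfolding \<beta>_def g1_def g2_def g3_def using D unfolding D_def
    by (simp_all add: det3_same12 det3_same13 det3_same23)
  have \<beta>nz: "fst (\<beta> x) \<noteq> 0 \<and> fst (snd (\<beta> x)) \<noteq> 0 \<and> snd (snd (\<beta> x)) \<noteq> 0"
    if "x \<in> B" "x \<notin> {b1,b2,b3}" for x
  proof -
    have "det3 x b2 b3 \<noteq> 0" by (rule ndet) (use that inB dB in auto)
    moreover have "det3 b1 x b3 \<noteq> 0" by (rule ndet) (use that inB dB in auto)
    moreover have "det3 b1 b2 x \<noteq> 0" by (rule ndet) (use that inB dB in auto)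
    ultimately show ?thesis unfolding \<beta>_def g1_def g2_def g3_def using D by simp
  qed
  have \<beta>prop: "x = y" if xy: "x \<in> B" "y \<in> B" "proportional (\<beta> x) (\<beta> y)" for x y
  proof -
    obtain k where k: "k \<noteq> 0" "\<beta> x = (k * fst (\<beta> y), k * fst (snd (\<beta> y)), k * snd (snd (\<beta> y)))"
      using xy(3) unfolding proportional_def by blast
    have "x = Lc (\<beta> x)" by (simp add: Lb)
    also have "\<dots> = (k * fst y, k * fst (snd y), k * snd (snd y))"
      unfolding k(2) Lc_def by (simp only: fst_conv snd_conv lincomb_scale Lb[of y, unfolded Lc_def])
    finally have "proportional x y" unfolding proportional_def using k by blast
    then show ?thesis using dist xy by blast
  qed
  have cv: "\<exists>m. m \<noteq> (0,0,0) \<and> (\<forall>b\<in>B - {y}. dot m (iota (\<beta> b)) = 0)"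
    if y: "y \<in> B" "y \<notin> {b1,b2,b3}" for y
  proof -
    obtain Q where Q: "nonzero_form 2 Q" "\<forall>v\<in>B - {y}. form_eval 2 Q v = 0" using conics y by blast
    have "is_form 2 (\<lambda>w. form_eval 2 Q (Lc w))" unfolding Lc_def by (intro is_form_lincomb is_form_id)
    then obtain q where q: "\<forall>w. form_eval 2 Q (Lc w) = form_eval 2 q w" unfolding is_form_def by blast
    have Qb: "form_eval 2 Q v = form_eval 2 q (\<beta> v)" for v using q Lb by metis
    have Qz: "form_eval 2 Q b = 0" if "b \<in> {b1,b2,b3}" for b using Q(2) that y inB by auto
    have "q (2,0,0) = 0" using Qb[of b1] Qz[of b1] \<beta>1 by (simp add: form2)
    moreover have "q (0,2,0) = 0" using Qb[of b2] Qz[of b2] \<beta>1 by (simp add: form2)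
    moreover have "q (0,0,2) = 0" using Qb[of b3] Qz[of b3] \<beta>1 by (simp add: form2)
    ultimately have qi: "form_eval 2 q w = dot (q (0,1,1), q (1,0,1), q (1,1,0)) (iota w)" for w
      by (cases w) (simp add: form2 dot_def iota_def algebra_simps)
    have "(q (0,1,1), q (1,0,1), q (1,1,0)) \<noteq> (0,0,0)"
    proof
      assume "(q (0,1,1), q (1,0,1), q (1,1,0)) = (0,0,0)"
      then have "\<forall>v. form_eval 2 Q v = 0" using Qb qi by (simp add: dot_def)
      then show False using form_zero[OF inf] Q(1) unfolding nonzero_form_def by blast
    qed
    moreover have "\<forall>b\<in>B - {y}. dot (q (0,1,1), q (1,0,1), q (1,1,0)) (iota (\<beta> b)) = 0"
      using Q(2) Qb qi by simp
    ultimately show ?thesis by blast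
  qed
  define i4 where "i4 = iota (\<beta> b4)"
  define i5 where "i5 = iota (\<beta> b5)"
  define i6 where "i6 = iota (\<beta> b6)"
  define i7 where "i7 = iota (\<beta> b7)"
  have nz4: "fst (\<beta> b4) \<noteq> 0 \<and> fst (snd (\<beta> b4)) \<noteq> 0 \<and> snd (snd (\<beta> b4)) \<noteq> 0"
    using \<beta>nz inB dB by simp
  have nz5: "fst (\<beta> b5) \<noteq> 0 \<and> fst (snd (\<beta> b5)) \<noteq> 0 \<and> snd (snd (\<beta> b5)) \<noteq> 0"
    using \<beta>nz inB dB by simp
  have nz6: "fst (\<beta> b6) \<noteq> 0 \<and> fst (snd (\<beta> b6)) \<noteq> 0 \<and> snd (snd (\<beta> b6)) \<noteq> 0"
    using \<beta>nz inB dB by simp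
  have nz7: "fst (\<beta> b7) \<noteq> 0 \<and> fst (snd (\<beta> b7)) \<noteq> 0 \<and> snd (snd (\<beta> b7)) \<noteq> 0"
    using \<beta>nz inB dB by simp
  have d6: "det3 i4 i5 i6 = 0"
  proof -
    obtain m where m: "m \<noteq> (0,0,0)" "\<forall>b\<in>B - {b7}. dot m (iota (\<beta> b)) = 0"
      using cv[of b7] inB dB by auto
    show ?thesis unfolding i4_def i5_def i6_def using m inB dB by (intro det_dep[of m]) auto
  qed
  have d7: "det3 i4 i5 i7 = 0"
  proof -
    obtain m where m: "m \<noteq> (0,0,0)" "\<forall>b\<in>B - {b6}. dot m (iota (\<beta> b)) = 0"
      using cv[of b6] inB dB by auto
    show ?thesis unfolding i4_def i5_def i7_def using m inB dB by (intro det_dep[of m]) auto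
  qed
  define n where "n = cross i4 i5"
  have nn: "n \<noteq> (0,0,0)"
  proof
    assume "n = (0,0,0)"
    then have "proportional i5 i4" unfolding n_def
      using cross_zero_prop iota_nz nz4 nz5 unfolding i4_def i5_def by blast
    then have "proportional (\<beta> b5) (\<beta> b4)" using iota_prop nz4 nz5 unfolding i4_def i5_def by blast
    then show False using \<beta>prop inB dB by blast
  qed
  obtain a0 b0 c0 where abc: "n = (a0, b0, c0)" by (cases n)
  have Qsb: "Qs a0 b0 c0 (\<beta> b) = 0" if "b \<in> {b4,b5,b6,b7}" for b
  proof -
    have "dot n i4 = 0" "dot n i5 = 0" "dot n i6 = 0" "dot n i7 = 0"
      unfolding n_def using d6 d7 det3_same13[of i4 i5] det3_same23[of i4 i5] unfolding det3_def by simp_all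
    then show ?thesis using that unfolding Qs_iota abc[symmetric] i4_def i5_def i6_def i7_def by auto
  qed
  have pull: False if "n' \<noteq> (0,0,0)" "dot n' (\<beta> b4) = 0" "dot n' (\<beta> b5) = 0" "dot n' (\<beta> b6) = 0" for n'
  proof -
    define m where "m = lincomb (fst n' / D) (fst (snd n') / D) (snd (snd n') / D) (cross b2 b3) (cross b3 b1) (cross b1 b2)"
    have dm: "dot m v = dot n' (\<beta> v)" for v
      unfolding m_def dot_lincomb \<beta>_def g1_def g2_def g3_def det3_1[of v b2 b3] det3_2[of b1 v b3] det3_3[of b1 b2 v]
      using D by (simp add: dot_def field_simps)
    have "m \<noteq> (0,0,0)"
    proof
      assume "m = (0,0,0)"
      then have "dot n' (\<beta> b1) = 0" "dot n' (\<beta> b2) = 0" "dot n' (\<beta> b3) = 0"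
        using dm by (simp_all add: dot_def)
      then show False using that(1) \<beta>1 by (cases n') (simp add: dot_def)
    qed
    then show False using lin3[of m b4 b5 b6] dm that inB dB by auto
  qed
  have a0: "a0 \<noteq> 0"
  proof
    assume a: "a0 = 0"
    have "dot (0, c0, b0) (\<beta> b) = 0" if "b \<in> {b4,b5,b6}" for b
    proof -
      have q: "Qs a0 b0 c0 (\<beta> b) = 0" by (rule Qsb) (use that in auto)
      have nz: "fst (\<beta> b) \<noteq> 0" using that nz4 nz5 nz6 by auto
      have "fst (\<beta> b) * dot (0, c0, b0) (\<beta> b) = Qs a0 b0 c0 (\<beta> b)"
        using a unfolding Qs_def dot_def by (simp add: algebra_simps)
      then show ?thesis using q nz by simp
    qed
    moreover have "(0, c0, b0) \<noteq> (0,0,0)" using nn a abc by auto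
    ultimately show False using pull by blast
  qed
  have b0: "b0 \<noteq> 0"
  proof
    assume a: "b0 = 0"
    have "dot (c0, 0, a0) (\<beta> b) = 0" if "b \<in> {b4,b5,b6}" for b
    proof -
      have q: "Qs a0 b0 c0 (\<beta> b) = 0" by (rule Qsb) (use that in auto)
      have nz: "fst (snd (\<beta> b)) \<noteq> 0" using that nz4 nz5 nz6 by auto
      have "fst (snd (\<beta> b)) * dot (c0, 0, a0) (\<beta> b) = Qs a0 b0 c0 (\<beta> b)"
        using a unfolding Qs_def dot_def by (simp add: algebra_simps)
      then show ?thesis using q nz by simp
    qed
    moreover have "(c0, 0, a0) \<noteq> (0,0,0)" using nn a abc by auto
    ultimately show False using pull by blast
  qed
  have c0: "c0 \<noteq> 0"
  proof
    assume a: "c0 = 0"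
    have "dot (b0, a0, 0) (\<beta> b) = 0" if "b \<in> {b4,b5,b6}" for b
    proof -
      have q: "Qs a0 b0 c0 (\<beta> b) = 0" by (rule Qsb) (use that in auto)
      have nz: "snd (snd (\<beta> b)) \<noteq> 0" using that nz4 nz5 nz6 by auto
      have "snd (snd (\<beta> b)) * dot (b0, a0, 0) (\<beta> b) = Qs a0 b0 c0 (\<beta> b)"
        using a unfolding Qs_def dot_def by (simp add: algebra_simps)
      then show ?thesis using q nz by simp
    qed
    moreover have "(b0, a0, 0) \<noteq> (0,0,0)" using nn a abc by auto
    ultimately show False using pull by blast
  qed
  have "is_form 3 (\<lambda>w. form_eval 3 c (Lc w))" unfolding Lc_def by (intro is_form_lincomb is_form_id)
  then obtain f where f: "\<forall>w. form_eval 3 c (Lc w) = form_eval 3 f w" unfolding is_form_def by blast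
  have Fb: "form_eval 3 c v = form_eval 3 f (\<beta> v)" for v using f Lb by metis
  have f0: "f (3,0,0) = 0" "f (0,3,0) = 0" "f (0,0,3) = 0"
    using Fb[of b1] Fb[of b2] Fb[of b3] Bc inB \<beta>1 by (simp_all add: form3)
  define W where "W = \<beta> ` {b4,b5,b6,b7}"
  have injB: "inj_on \<beta> {b4,b5,b6,b7}" by (metis Lb inj_on_inverseI)
  have "\<exists>n2. \<forall>w. form_eval 3 f w = Qs a0 b0 c0 w * dot n2 w"
  proof (rule conic_core[OF a0 b0 c0 f0])
    show "finite W" unfolding W_def by simp
    show "card W \<ge> 4" unfolding W_def using card_image[OF injB] dB by simp
    show "\<forall>w\<in>W. fst w \<noteq> 0 \<and> fst (snd w) \<noteq> 0 \<and> snd (snd w) \<noteq> 0 \<and> Qs a0 b0 c0 w = 0 \<and> form_eval 3 f w = 0"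
      unfolding W_def using nz4 nz5 nz6 nz7 Qsb Fb Bc inB by auto
    show "\<forall>x\<in>W. \<forall>y\<in>W. proportional x y \<longrightarrow> x = y"
      unfolding W_def using \<beta>prop inB by blast
  qed
  then obtain n2 where n2: "\<forall>w. form_eval 3 f w = Qs a0 b0 c0 w * dot n2 w" by blast
  have "is_form 2 (Qs a0 b0 c0)"
  proof -
    define qc where "qc = (\<lambda>m::nat\<times>nat\<times>nat. if m = (0,1,1) then a0 else if m = (1,0,1) then b0
       else if m = (1,1,0) then c0 else 0)"
    have "Qs a0 b0 c0 v = form_eval 2 qc v" for v
      by (cases v) (simp add: form2 qc_def Qs_def algebra_simps)
    then show ?thesis unfolding is_form_def by blast
  qed
  then have L2: "is_form 2 (\<lambda>v. Qs a0 b0 c0 (g1 v, g2 v, g3 v))"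
    by (intro is_form_subst g1f g2f g3f)
  have L1: "is_form 1 (\<lambda>v. dot n2 (g1 v, g2 v, g3 v))"
    by (intro is_form_subst g1f g2f g3f is_form_lin)
  have "\<forall>v. form_eval 3 c v = dot n2 (g1 v, g2 v, g3 v) * Qs a0 b0 c0 (g1 v, g2 v, g3 v)"
    using Fb n2 unfolding \<beta>_def by simp
  then show False using reducible[OF inf nz3 L1 L2] irr by blast
qed

theorem proposition5p1:
  fixes K :: "'a::field set"
    and c :: "nat \<times> nat \<times> nat \<Rightarrow> 'a"
    and B :: "'a pt set"
  assumes "is_algebraic_closure_of K"
    and "perfect_subfield K"
    and "(2::'a) \<noteq> 0"
    and "\<forall>m. c m \<in> K"
    and "abs_irreducible_cubic c"
    and "B \<subseteq> curve_points c"
    and "distinct_proj_points B"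
    and "card B = 7"
    and "gal_orbit K B"
    and "gal_image K B = {\<pi>. \<pi> permutes B} \<or>
         gal_image K B = {\<pi>. \<pi> permutes B \<and> evenperm \<pi>}"
  shows "general_position B"
proof -
  have inf: "infinite (UNIV::'a set)"
    using assms(1) alg_closed_infinite unfolding is_algebraic_closure_of_def by blast
  have nz3: "nonzero_form 3 c" using assms(5) unfolding abs_irreducible_cubic_def by blast
  have Bc: "\<forall>b\<in>B. b \<noteq> (0,0,0) \<and> form_eval 3 c b = 0"
    using assms(6) unfolding curve_points_def by blast
  have dist: "\<forall>b\<in>B. \<forall>b'\<in>B. proportional b b' \<longrightarrow> b = b'"
    using assms(7) unfolding distinct_proj_points_def by blast
  have even: "\<exists>\<sigma>. field_aut \<sigma> \<and> (\<forall>b\<in>B. proportional (pt_map \<sigma> b) (\<pi> b))"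
    if "\<pi> permutes B" "evenperm \<pi>" for \<pi>
  proof -
    have "\<pi> \<in> gal_image K B" using assms(10) that by blast
    then obtain \<sigma> where "\<sigma> \<in> Gal K" "\<forall>b\<in>B. proportional (pt_map \<sigma> b) (\<pi> b)"
      unfolding gal_image_def by blast
    then show ?thesis unfolding Gal_def by blast
  qed
  have A: "\<forall>S\<subseteq>B. card S = 3 \<longrightarrow> \<not> (\<exists>l. nonzero_form 1 l \<and> (\<forall>v\<in>S. form_eval 1 l v = 0))"
    by (rule partA[OF inf nz3 assms(5) Bc dist assms(8) even])
  have B: "\<forall>S\<subseteq>B. card S = 6 \<longrightarrow> \<not> (\<exists>q. nonzero_form 2 q \<and> (\<forall>v\<in>S. form_eval 2 q v = 0))"
    by (rule partB[OF inf nz3 assms(5) Bc dist assms(8) even A])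
  show ?thesis unfolding general_position_def using A B by blast
qed

end
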